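(* Let $(N,v)$ be a TU game with $\Pi(v)\neq\emptyset$. Then $\{\Pi(v),\Gamma(v),\Upsilon(v),\Psi(v)\}$ is a partition of $\Omega(v)$: each of the four sets is a subset of $\Omega(v)$, and every element of $\Omega(v)$ belongs to exactly one of them.
   Context: A TU game is a pair $(N,v)$ with $N=\{1,\dots,n\}$ and $v:2^N\to\mathbb{R}$, $v(\emptyset)=0$. $\mathcal{P}(N)$ denotes the set of partitions of $N$. A core solution is a pair $(\mathbf{x},\rho)$ with $\mathbf{x}\in\mathbb{R}^n$, $\rho\in\mathcal{P}(N)$, such that $\sum_{i\in S}x_i\ge v(S)$ for all $S\subseteq N$ and $\sum_{i\in S}x_i=v(S)$ for all $S\in\rho$; $\Pi(v)$ is the set of core solutions. $K_v=\max_{\rho\in\mathcal{P}(N)}\sum_{S\in\rho}v(S)$. A feasible environment state is a pair $(\mathbf{a},\mathcal{C})$ with $\mathbf{a}\in\mathbb{R}^n$ and $\mathcal{C}$ a set of pairwise disjoint subsets of $N$ such that $a_i\ge v(\{i\})$ for all $i\in N$ and $\sum_{i\in S}a_i\le v(S)$ for all $S\in\mathcal{C}$; $\Omega(v)$ is the set of feasible environment states. Define $\Gamma(v)=\{(\mathbf{a},\mathcal{C})\in\Omega(v):\sum_{i\in N}a_i=K_v,\ \sum_{i\in S}a_i\ge v(S)\ \forall S\subseteq N,\ \mathcal{C}\notin\mathcal{P}(N)\}$, $\Upsilon(v)=\{(\mathbf{a},\mathcal{C})\in\Omega(v):\sum_{i\in N}a_i>K_v,\ \sum_{i\in S}a_i\ge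 v(S)\ \forall S\subseteq N\}$, $\Psi(v)=\{(\mathbf{a},\mathcal{C})\in\Omega(v):\exists S\subseteq N \text{ with } \sum_{i\in S}a_i<v(S)\}$. *)

theory Defs
  imports Complex_Main "HOL-Library.Disjoint_Sets"
begin

(* Players N = {1..n}; a game is v :: nat set => real (only values on subsets of N matter).
   Payoff vectors are functions nat => real (only components in N matter). *)

definition players :: "nat \<Rightarrow> nat set" where
  "players n = {1..n}"

definition partitions :: "nat \<Rightarrow> nat set set set" where
  "partitions n = {\<rho>. partition_on (players n) \<rho>}"

definition core_solutions :: "nat \<Rightarrow> (nat set \<Rightarrow> real) \<Rightarrow> ((nat \<Rightarrow> real) \<times> nat set set) set" where
  "core_solutions n v = {(x, \<rho>). \<rho> \<in> partitions n \<and>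
      (\<forall>S. S \<subseteq> players n \<longrightarrow> sum x S \<ge> v S) \<and>
      (\<forall>S\<in>\<rho>. sum x S = v S)}"

definition K_val :: "nat \<Rightarrow> (nat set \<Rightarrow> real) \<Rightarrow> real" where
  "K_val n v = Max {(\<Sum>S\<in>\<rho>. v S) | \<rho>. \<rho> \<in> partitions n}"

definition feasible_states :: "nat \<Rightarrow> (nat set \<Rightarrow> real) \<Rightarrow> ((nat \<Rightarrow> real) \<times> nat set set) set" where
  "feasible_states n v = {(a, C). C \<subseteq> Pow (players n) \<and> disjoint C \<and>
      (\<forall>i\<in>players n. a i \<ge> v {i}) \<and>
      (\<forall>S\<in>C. sum a S \<le> v S)}"

definition Gamma_set :: "nat \<Rightarrow> (nat set \<Rightarrow> real) \<Rightarrow> ((nat \<Rightarrow> real) \<times> nat set set) set" where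
  "Gamma_set n v = {(a, C) \<in> feasible_states n v.
      sum a (players n) = K_val n v \<and>
      (\<forall>S. S \<subseteq> players n \<longrightarrow> sum a S \<ge> v S) \<and> C \<notin> partitions n}"

definition Upsilon_set :: "nat \<Rightarrow> (nat set \<Rightarrow> real) \<Rightarrow> ((nat \<Rightarrow> real) \<times> nat set set) set" where
  "Upsilon_set n v = {(a, C) \<in> feasible_states n v.
      sum a (players n) > K_val n v \<and>
      (\<forall>S. S \<subseteq> players n \<longrightarrow> sum a S \<ge> v S)}"

definition Psi_set :: "nat \<Rightarrow> (nat set \<Rightarrow> real) \<Rightarrow> ((nat \<Rightarrow> real) \<times> nat set set) set" where
  "Psi_set n v = {(a, C) \<in> feasible_states n v.
      (\<exists>S. S \<subseteq> players n \<and> sum a S < v S)}"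

end

theory Submission
  imports Defs
begin

lemma fin_parts: "finite (partitions n)"
proof -
  have "partitions n \<subseteq> Pow (Pow (players n))"
    unfolding partitions_def partition_on_def by auto
  moreover have "finite (Pow (Pow (players n)))" by (simp add: players_def)
  ultimately show ?thesis by (rule finite_subset)
qed

lemma sum_part:
  assumes "\<rho> \<in> partitions n"
  shows "sum a (players n) = (\<Sum>S\<in>\<rho>. sum a S)"
proof -
  have p: "partition_on (players n) \<rho>" using assms by (simp add: partitions_def)
  have fin: "finite (players n)" by (simp add: players_def)
  have u: "\<Union>\<rho> = players n" using p by (simp add: partition_on_def)
  have fr: "finite \<rho>" using fin u by (metis finite_UnionD)
  have fa: "\<forall>A\<in>\<rho>. finite A" using fin u by (metis Union_upper finite_subset)
  have d: "\<forall>A\<in>\<rho>. \<forall>B\<in>\<rho>. A \<noteq> B \<longrightarrow> A \<inter> B = {}"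
    using p unfolding partition_on_def disjoint_def by blast
  have "sum a (\<Union>\<rho>) = (\<Sum>S\<in>\<rho>. sum a S)"
    using sum.Union_disjoint[OF fa d] fr by simp
  with u show ?thesis by simp
qed

lemma parts_ne: "partitions n \<noteq> {}"
proof (cases "players n = {}")
  case True
  then have "{} \<in> partitions n" by (simp add: partitions_def partition_on_empty)
  then show ?thesis by blast
next
  case False
  then have "{players n} \<in> partitions n" by (simp add: partitions_def partition_on_space)
  then show ?thesis by blast
qed

lemma K_ge:
  assumes "\<forall>S. S \<subseteq> players n \<longrightarrow> sum a S \<ge> v S"
  shows "sum a (players n) \<ge> K_val n v"
proof -
  let ?M = "{(\<Sum>S\<in>\<rho>. v S) | \<rho>. \<rho> \<in> partitions n}"
  have f: "finite ?M" using fin_parts by simp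
  have ne: "?M \<noteq> {}" using parts_ne by blast
  obtain \<rho> where r: "\<rho> \<in> partitions n" "K_val n v = (\<Sum>S\<in>\<rho>. v S)"
    using Max_in[OF f ne] unfolding K_val_def by blast
  have sub: "\<forall>S\<in>\<rho>. S \<subseteq> players n"
    using r(1) unfolding partitions_def partition_on_def by blast
  have "(\<Sum>S\<in>\<rho>. v S) \<le> (\<Sum>S\<in>\<rho>. sum a S)"
    using sub assms by (intro sum_mono) auto
  then show ?thesis using r sum_part[OF r(1), of a] by simp
qed

lemma K_le:
  assumes "\<rho> \<in> partitions n" "\<forall>S\<in>\<rho>. sum a S \<le> v S"
  shows "sum a (players n) \<le> K_val n v"
proof -
  let ?M = "{(\<Sum>S\<in>\<rho>. v S) | \<rho>. \<rho> \<in> partitions n}"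
  have f: "finite ?M" using fin_parts by simp
  have "(\<Sum>S\<in>\<rho>. v S) \<le> K_val n v"
    unfolding K_val_def using assms(1) by (intro Max_ge[OF f]) blast
  moreover have "(\<Sum>S\<in>\<rho>. sum a S) \<le> (\<Sum>S\<in>\<rho>. v S)"
    using assms(2) by (intro sum_mono) auto
  ultimately show ?thesis using sum_part[OF assms(1), of a] by simp
qed

theorem proposition7:
  fixes n :: nat and v :: "nat set \<Rightarrow> real"
  assumes "v {} = 0"
    and "core_solutions n v \<noteq> {}"
  shows "core_solutions n v \<subseteq> feasible_states n v
    \<and> Gamma_set n v \<subseteq> feasible_states n v
    \<and> Upsilon_set n v \<subseteq> feasible_states n v
    \<and> Psi_set n v \<subseteq> feasible_states n v
    \<and> (\<forall>\<omega>\<in>feasible_states n v.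
          length (filter (\<lambda>X. \<omega> \<in> X)
            [core_solutions n v, Gamma_set n v, Upsilon_set n v, Psi_set n v]) = 1)"
proof (intro conjI ballI)
  show "core_solutions n v \<subseteq> feasible_states n v"
  proof
    fix w assume "w \<in> core_solutions n v"
    then obtain x \<rho> where w: "w = (x, \<rho>)" "\<rho> \<in> partitions n"
      "\<forall>S. S \<subseteq> players n \<longrightarrow> sum x S \<ge> v S" "\<forall>S\<in>\<rho>. sum x S = v S"
      unfolding core_solutions_def by blast
    have p: "partition_on (players n) \<rho>" using w(2) by (simp add: partitions_def)
    have "\<rho> \<subseteq> Pow (players n)" "disjoint \<rho>"
      using p unfolding partition_on_def by auto
    moreover have "\<forall>i\<in>players n. x i \<ge> v {i}"
    proof
      fix i assume "i \<in> players n"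
      then have "{i} \<subseteq> players n" by simp
      then have "sum x {i} \<ge> v {i}" using w(3) by blast
      then show "x i \<ge> v {i}" by simp
    qed
    ultimately show "w \<in> feasible_states n v" using w(1,4) unfolding feasible_states_def by auto
  qed
  show "Gamma_set n v \<subseteq> feasible_states n v" unfolding Gamma_set_def by auto
  show "Upsilon_set n v \<subseteq> feasible_states n v" unfolding Upsilon_set_def by auto
  show "Psi_set n v \<subseteq> feasible_states n v" unfolding Psi_set_def by auto
  fix w assume wf: "w \<in> feasible_states n v"
  obtain a C where w: "w = (a, C)" by fastforce
  have feas: "\<forall>S\<in>C. sum a S \<le> v S" using wf w unfolding feasible_states_def by auto
  show "length (filter (\<lambda>X. w \<in> X)
            [core_solutions n v, Gamma_set n v, Upsilon_set n v, Psi_set n v]) = 1"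
  proof (cases "\<exists>S. S \<subseteq> players n \<and> sum a S < v S")
    case True
    then have "w \<in> Psi_set n v" "w \<notin> core_solutions n v" "w \<notin> Gamma_set n v" "w \<notin> Upsilon_set n v"
      using wf w unfolding Psi_set_def core_solutions_def Gamma_set_def Upsilon_set_def
      by (auto simp: not_less[symmetric])
    then show ?thesis by simp
  next
    case False
    then have core: "\<forall>S. S \<subseteq> players n \<longrightarrow> sum a S \<ge> v S" by (auto simp: not_less)
    have np: "w \<notin> Psi_set n v" using False w unfolding Psi_set_def by auto
    have ge: "sum a (players n) \<ge> K_val n v" using K_ge[OF core] .
    show ?thesis
    proof (cases "sum a (players n) > K_val n v")
      case True
      have "w \<notin> core_solutions n v"
      proof
        assume "w \<in> core_solutions n v"
        then have "C \<in> partitions n" "\<forall>S\<in>C. sum a S = v S" using w unfolding core_solutions_def by auto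
        then have "sum a (players n) \<le> K_val n v" using K_le by simp
        then show False using True by simp
      qed
      moreover have "w \<in> Upsilon_set n v" using True core wf w unfolding Upsilon_set_def by auto
      moreover have "w \<notin> Gamma_set n v" using True w unfolding Gamma_set_def by auto
      ultimately show ?thesis using np by simp
    next
      case False
      then have eq: "sum a (players n) = K_val n v" using ge by simp
      have nu: "w \<notin> Upsilon_set n v" using eq w unfolding Upsilon_set_def by auto
      show ?thesis
      proof (cases "C \<in> partitions n")
        case True
        have "\<forall>S\<in>C. sum a S = v S"
        proof
          fix S assume S: "S \<in> C"
          have "S \<subseteq> players n" using True S unfolding partitions_def partition_on_def by blast
          then show "sum a S = v S" using core feas S by (meson order_antisym)
        qed
        then have "w \<in> core_solutions n v" using True core w unfolding core_solutions_def by auto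
        moreover have "w \<notin> Gamma_set n v" using True w unfolding Gamma_set_def by auto
        ultimately show ?thesis using np nu by simp
      next
        case False
        then have "w \<notin> core_solutions n v" using w unfolding core_solutions_def by auto
        moreover have "w \<in> Gamma_set n v" using False eq core wf w unfolding Gamma_set_def by auto
        ultimately show ?thesis using np nu by simp
      qed
    qed
  qed
qed

end
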